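(* Under the standing AoI model, let $v\ge0$ and $T_v=(v-T_{\rm tx})^+$. Then the peak-AoI violation probability is $$P_{p^v}=\mathbb{P}[\Delta_{p,k}\ge v]=1-\frac{\beta^{2\alpha}}{\Gamma(\alpha)^2}\sum_{n=0}^\infty\sum_{k=0}^\infty\frac{T_v^{2\alpha+n+k}}{n!\,k!\,(\alpha+n)}B(\alpha+n+1,\alpha+k)\Big\{(-\beta)^{n+k}-e^{-\rho T_v}(\rho-\beta)^{n+k}\Big\}.$$
   Context: Standing AoI model. Fix $\alpha>0$, $\beta>0$, $\rho>0$ and a constant $T_{\rm tx}\ge0$. Let $(X_k)_{k\ge0}$ be i.i.d. Gamma$(\alpha,\beta)$ random variables with density $f(x)=\frac{\beta^\alpha}{\Gamma(\alpha)}x^{\alpha-1}e^{-\beta x}$ for $x>0$. Let $(T_{{\rm int},k})_{k\ge1}$ be i.i.d. exponential random variables with rate $\rho$, independent of $(X_k)$. The peak AoI is $\Delta_{p,k}=X_{k-1}+X_k+T_{{\rm int},k}+T_{\rm tx}$ for $k\ge1$. $B(a,b)$ denotes the Beta function and $(y)^+=\max(0,y)$. *)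

theory Defs
  imports "HOL-Probability.Probability"
begin

definition gamma_density :: "real \<Rightarrow> real \<Rightarrow> real \<Rightarrow> real" where
  "gamma_density a b x =
     (if x > 0 then b powr a / Gamma a * x powr (a - 1) * exp (- b * x) else 0)"

end

theory Submission imports Defs begin

lemma HK_to_L:
  fixes f :: "real \<Rightarrow> real"
  assumes nn: "\<And>x. x \<in> \<Omega> \<Longrightarrow> 0 \<le> f x" and hi: "(f has_integral I) \<Omega>"
    and meas: "(\<lambda>x. indicator \<Omega> x * f x) \<in> borel_measurable borel"
  shows "integrable lborel (\<lambda>x. indicator \<Omega> x * f x) \<and> (\<integral>x. indicator \<Omega> x * f x \<partial>lborel) = I"
proof -
  have "0 \<le> I" using has_integral_nonneg[OF hi] nn by auto
  have "(\<integral>\<^sup>+x. indicator \<Omega> x * f x \<partial>lborel) = ennreal I"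
    using nn_integral_has_integral_lebesgue[OF nn hi] by simp
  moreover have "\<And>x. 0 \<le> indicator \<Omega> x * f x" using nn by (simp add: indicator_def)
  ultimately show ?thesis
    using nn_integral_eq_integrable[of "\<lambda>x. indicator \<Omega> x * f x" lborel I] meas \<open>0 \<le> I\<close>
    by simp
qed

lemma L0:
  fixes p d :: real
  assumes "p > -1" "d \<ge> 0"
  shows "integrable lborel (\<lambda>x. indicator {0<..<d} x * x powr p)
    \<and> (\<integral>x. indicator {0<..<d} x * x powr p \<partial>lborel) = d powr (p+1) / (p+1)"
proof (rule HK_to_L)
  show "((\<lambda>x. x powr p) has_integral d powr (p+1) / (p+1)) {0<..<d}"
    using has_integral_powr_from_0[OF assms] by (simp add: has_integral_Icc_iff_Ioo)
qed auto

lemma L1a: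
  fixes p q :: real
  assumes "p > -1" "q > -1"
  shows "integrable lborel (\<lambda>x. indicator {0<..<1} x * (x powr p * (1 - x) powr q))
    \<and> (\<integral>x. indicator {0<..<1} x * (x powr p * (1 - x) powr q) \<partial>lborel) = Beta (p+1) (q+1)"
proof (rule HK_to_L)
  show "((\<lambda>x. x powr p * (1 - x) powr q) has_integral Beta (p+1) (q+1)) {0<..<1}"
    using has_integral_Beta_real[of "p+1" "q+1"] assms by (simp add: has_integral_Icc_iff_Ioo)
qed auto


lemma L1:
  fixes p q c :: real
  assumes "p > -1" "q > -1" "c > 0"
  shows "integrable lborel (\<lambda>x. indicator {0<..<c} x * (x powr p * (c - x) powr q))
    \<and> (\<integral>x. indicator {0<..<c} x * (x powr p * (c - x) powr q) \<partial>lborel) = c powr (p+q+1) * Beta (p+1) (q+1)"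
proof -
  define f where "f = (\<lambda>x. indicator {0<..<c} x * (x powr p * (c - x) powr q))"
  define g where "g = (\<lambda>x::real. indicator {0<..<1} x * (x powr p * (1 - x) powr q))"
  have eq: "f (0 + c * x) = c powr (p+q) * g x" for x
  proof (cases "x \<in> {0<..<1}")
    case True
    then have "c * x \<in> {0<..<c}" using assms by (auto simp: mult_less_cancel_left1)
    moreover have "(c * x) powr p = c powr p * x powr p" using True assms by (simp add: powr_mult)
    moreover have "(c - c * x) powr q = c powr q * (1 - x) powr q"
      using True assms by (simp add: powr_mult[symmetric] right_diff_distrib)
    ultimately show ?thesis using True by (simp add: f_def g_def powr_add)
  next
    case False
    then have "c * x \<notin> {0<..<c}" using assms
      by (auto simp: mult_less_cancel_left1 zero_less_mult_iff)
    then show ?thesis using False by (simp add: f_def g_def)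
  qed
  have gi: "integrable lborel g" and gv: "integral\<^sup>L lborel g = Beta (p+1) (q+1)"
    using L1a[OF assms(1,2)] by (simp_all add: g_def)
  have "integrable lborel (\<lambda>x. f (0 + c * x))"
    unfolding eq using gi by simp
  then have fi: "integrable lborel f"
    using lborel_integrable_real_affine_iff[of c f 0] assms by simp
  have "integral\<^sup>L lborel f = \<bar>c\<bar> *\<^sub>R (\<integral>x. f (0 + c * x) \<partial>lborel)"
    using lborel_integral_real_affine[of c f 0] assms by simp
  also have "\<dots> = c * (c powr (p+q) * Beta (p+1) (q+1))"
    unfolding eq using assms gv by simp
  also have "\<dots> = c powr (p+q+1) * Beta (p+1) (q+1)"
    using assms by (simp add: powr_add)
  finally show ?thesis using fi by (simp add: f_def)
qed


lemma GEN:
  fixes w \<phi> g :: "real \<Rightarrow> real" and a :: "nat \<Rightarrow> real" and R :: real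
  assumes wi: "integrable lborel w" and wnn: "\<And>x. 0 \<le> w x" and phim: "\<phi> \<in> borel_measurable borel"
    and R: "R \<ge> 0"
    and bnd: "\<And>x. w x \<noteq> 0 \<Longrightarrow> \<bar>\<phi> x\<bar> \<le> R" and sa: "summable (\<lambda>n. \<bar>a n\<bar> * R^n)"
    and sg: "\<And>x. w x \<noteq> 0 \<Longrightarrow> (\<lambda>n. a n * \<phi> x ^ n) sums g x"
  shows "integrable lborel (\<lambda>x. w x * g x) \<and>
    (\<lambda>n. a n * (\<integral>x. w x * \<phi> x ^ n \<partial>lborel)) sums (\<integral>x. w x * g x \<partial>lborel)"
proof -
  define f where "f n x = w x * (a n * \<phi> x ^ n)" for n x
  have wm[measurable]: "w \<in> borel_measurable borel" using borel_measurable_integrable[OF wi] by simp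
  note phim[measurable]
  have fm[measurable]: "f n \<in> borel_measurable borel" for n unfolding f_def by measurable
  have fb: "norm (f n x) \<le> \<bar>a n\<bar> * R^n * w x" for n x
  proof (cases "w x = 0")
    case True thus ?thesis by (simp add: f_def)
  next
    case False
    then have "\<bar>\<phi> x\<bar>^n \<le> R^n" using bnd power_mono abs_ge_zero by blast
    then have "\<bar>a n\<bar> * \<bar>\<phi> x\<bar>^n \<le> \<bar>a n\<bar> * R^n" by (simp add: mult_left_mono)
    then have "w x * (\<bar>a n\<bar> * \<bar>\<phi> x\<bar>^n) \<le> w x * (\<bar>a n\<bar> * R^n)"
      using wnn[of x] by (simp add: mult_left_mono)
    then show ?thesis using wnn[of x] by (simp add: f_def abs_mult power_abs mult_ac)
  qed
  have fi: "integrable lborel (f n)" for n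
  proof (rule Bochner_Integration.integrable_bound[of _ "\<lambda>x. \<bar>a n\<bar> * R^n * w x"])
    show "integrable lborel (\<lambda>x. \<bar>a n\<bar> * R ^ n * w x)" using wi by simp
    show "AE x in lborel. norm (f n x) \<le> norm (\<bar>a n\<bar> * R ^ n * w x)"
      using fb wnn R by (auto intro: order_trans[OF fb] simp: abs_mult)
  qed simp
  have summ: "AE x in lborel. summable (\<lambda>n. norm (f n x))"
  proof (rule AE_I2)
    fix x
    show "summable (\<lambda>n. norm (f n x))"
      by (rule summable_comparison_test[OF _ summable_mult2[OF sa, of "w x"]]) (use fb in simp)
  qed
  have sI: "summable (\<lambda>n. \<integral>x. norm (f n x) \<partial>lborel)"
  proof (rule summable_comparison_test[OF _ summable_mult2[OF sa, of "integral\<^sup>L lborel w"]])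
    show "\<exists>N. \<forall>n\<ge>N. norm (\<integral>x. norm (f n x) \<partial>lborel) \<le> \<bar>a n\<bar> * R ^ n * integral\<^sup>L lborel w"
    proof (intro exI allI impI)
      fix n :: nat
      have "(\<integral>x. norm (f n x) \<partial>lborel) \<le> (\<integral>x. \<bar>a n\<bar> * R ^ n * w x \<partial>lborel)"
        by (rule integral_mono) (use fi wi fb in auto)
      also have "\<dots> = \<bar>a n\<bar> * R ^ n * integral\<^sup>L lborel w" by simp
      finally show "norm (\<integral>x. norm (f n x) \<partial>lborel) \<le> \<bar>a n\<bar> * R ^ n * integral\<^sup>L lborel w"
        by (simp add: integral_nonneg_AE)
    qed
  qed
  have sumeq: "(\<lambda>x. \<Sum>n. f n x) = (\<lambda>x. w x * g x)"
  proof
    fix x show "(\<Sum>n. f n x) = w x * g x"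
    proof (cases "w x = 0")
      case True thus ?thesis by (simp add: f_def)
    next
      case False
      have "(\<lambda>n. w x * (a n * \<phi> x ^ n)) sums (w x * g x)" by (rule sums_mult[OF sg[OF False]])
      then show ?thesis by (simp add: f_def sums_iff)
    qed
  qed
  have intf: "integral\<^sup>L lborel (f n) = a n * (\<integral>x. w x * \<phi> x ^ n \<partial>lborel)" for n
  proof -
    have "f n = (\<lambda>x. a n * (w x * \<phi> x ^ n))" by (auto simp: f_def fun_eq_iff mult_ac)
    then show ?thesis by simp
  qed
  show ?thesis
    using integrable_suminf[OF fi summ sI] sums_integral[OF fi summ sI]
    unfolding sumeq intf by simp
qed


lemma exp_series_lin: "(\<lambda>n. \<gamma>^n / fact n * x ^ n) sums exp (\<gamma> * (x::real))"
proof -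
  have "(\<lambda>n. (\<gamma>*x)^n /\<^sub>R fact n) sums exp (\<gamma> * x)" by (rule exp_converges)
  then show ?thesis by (simp add: power_mult_distrib divide_inverse mult_ac)
qed

lemma summable_exp_abs: "summable (\<lambda>n. \<bar>\<gamma>^n / fact n\<bar> * (R::real) ^ n)"
proof -
  have "(\<lambda>n. \<bar>\<gamma>\<bar>^n / fact n * R ^ n) sums exp (\<bar>\<gamma>\<bar> * R)" by (rule exp_series_lin)
  then show ?thesis by (simp add: sums_iff power_abs)
qed

definition Ainn :: "real \<Rightarrow> real \<Rightarrow> real \<Rightarrow> real" where
  "Ainn \<alpha> \<gamma> d = (\<integral>x. indicator {0<..<d} x * x powr (\<alpha> - 1) * exp (\<gamma> * x) \<partial>lborel)"

lemma Claim1: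
  fixes \<alpha> \<gamma> d :: real
  assumes a: "\<alpha> > 0" and d: "d \<ge> 0"
  shows "integrable lborel (\<lambda>x. indicator {0<..<d} x * x powr (\<alpha> - 1) * exp (\<gamma> * x))
    \<and> (\<lambda>n. \<gamma>^n / fact n * (d powr (\<alpha> + n) / (\<alpha> + n))) sums Ainn \<alpha> \<gamma> d"
proof -
  define w where "w = (\<lambda>x. indicator {0<..<d} x * x powr (\<alpha> - 1))"
  have L: "integrable lborel w" using L0[of "\<alpha>-1" d] a d by (simp add: w_def)
  have G: "integrable lborel (\<lambda>x. w x * exp (\<gamma> * x)) \<and>
    (\<lambda>n. \<gamma>^n / fact n * (\<integral>x. w x * x ^ n \<partial>lborel)) sums (\<integral>x. w x * exp (\<gamma> * x) \<partial>lborel)"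
  proof (rule GEN[OF L, where R=d and \<phi>="\<lambda>x. x" and a="\<lambda>n. \<gamma>^n / fact n" and g="\<lambda>x. exp (\<gamma> * x)"])
    show "\<And>x. 0 \<le> w x" by (simp add: w_def)
    show "\<And>x. w x \<noteq> 0 \<Longrightarrow> \<bar>x\<bar> \<le> d" by (auto simp: w_def indicator_def)
  qed (use d exp_series_lin summable_exp_abs in auto)
  have wn: "(\<integral>x. w x * x ^ n \<partial>lborel) = d powr (\<alpha> + n) / (\<alpha> + n)" for n :: nat
  proof -
    have "(\<lambda>x. w x * x ^ n) = (\<lambda>x. indicator {0<..<d} x * x powr (\<alpha> - 1 + n))"
      by (auto simp: w_def fun_eq_iff indicator_def powr_add powr_realpow)
    then show ?thesis using L0[of "\<alpha> - 1 + n" d] a d by simp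
  qed
  show ?thesis using G unfolding wn by (simp add: w_def Ainn_def mult_ac)
qed


definition Bn :: "real \<Rightarrow> real \<Rightarrow> real \<Rightarrow> nat \<Rightarrow> real" where
  "Bn \<alpha> \<gamma> c n = (\<integral>x. indicator {0<..<c} x * x powr (\<alpha> - 1) * (c - x) powr (\<alpha> + n) * exp (\<gamma> * x) \<partial>lborel)"

lemma Claim3:
  fixes \<alpha> \<gamma> c :: real
  assumes a: "\<alpha> > 0" and c: "c > 0"
  shows "(\<lambda>m. \<gamma>^m / fact m * (c powr (2*\<alpha> + n + m) * Beta (\<alpha> + n + 1) (\<alpha> + m))) sums Bn \<alpha> \<gamma> c n"
proof -
  define w where "w = (\<lambda>x. indicator {0<..<c} x * x powr (\<alpha> - 1) * (c - x) powr (\<alpha> + n))"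
  have L: "integrable lborel w" using L1[of "\<alpha>-1" "\<alpha> + n" c] a c by (simp add: w_def mult_ac)
  have G: "integrable lborel (\<lambda>x. w x * exp (\<gamma> * x)) \<and>
    (\<lambda>m. \<gamma>^m / fact m * (\<integral>x. w x * x ^ m \<partial>lborel)) sums (\<integral>x. w x * exp (\<gamma> * x) \<partial>lborel)"
  proof (rule GEN[OF L, where R=c and \<phi>="\<lambda>x. x" and a="\<lambda>n. \<gamma>^n / fact n" and g="\<lambda>x. exp (\<gamma> * x)"])
    show "\<And>x. 0 \<le> w x" by (simp add: w_def)
    show "\<And>x. w x \<noteq> 0 \<Longrightarrow> \<bar>x\<bar> \<le> c" by (auto simp: w_def indicator_def)
  qed (use c exp_series_lin summable_exp_abs in auto)
  have wn: "(\<integral>x. w x * x ^ m \<partial>lborel) = c powr (2*\<alpha> + n + m) * Beta (\<alpha> + n + 1) (\<alpha> + m)" for m :: nat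
  proof -
    have "(\<lambda>x. w x * x ^ m) = (\<lambda>x. indicator {0<..<c} x * (x powr (\<alpha> - 1 + m) * (c - x) powr (\<alpha> + n)))"
      by (auto simp: w_def fun_eq_iff indicator_def powr_add powr_realpow)
    moreover have "\<alpha> - 1 + m + (\<alpha> + n) + 1 = 2*\<alpha> + n + m" by simp
    ultimately show ?thesis using L1[of "\<alpha> - 1 + m" "\<alpha> + n" c] a c
      by (simp add: Beta_commute add_ac)
  qed
  show ?thesis using G unfolding wn by (simp add: w_def Bn_def mult_ac)
qed


definition Jf :: "real \<Rightarrow> real \<Rightarrow> real \<Rightarrow> real" where
  "Jf \<alpha> \<gamma> c = (\<integral>y. indicator {0<..<c} y * y powr (\<alpha> - 1) * exp (\<gamma> * y) * Ainn \<alpha> \<gamma> (c - y) \<partial>lborel)"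

lemma Claim2:
  fixes \<alpha> \<gamma> c :: real
  assumes a: "\<alpha> > 0" and c: "c > 0"
  shows "integrable lborel (\<lambda>y. indicator {0<..<c} y * y powr (\<alpha> - 1) * exp (\<gamma> * y) * Ainn \<alpha> \<gamma> (c - y))
    \<and> (\<lambda>n. \<gamma>^n / (fact n * (\<alpha> + n)) * Bn \<alpha> \<gamma> c n) sums Jf \<alpha> \<gamma> c"
proof -
  define w where "w = (\<lambda>y. indicator {0<..<c} y * y powr (\<alpha> - 1) * (c - y) powr \<alpha> * exp (\<gamma> * y))"
  define g where "g = (\<lambda>y. Ainn \<alpha> \<gamma> (c - y) / (c - y) powr \<alpha>)"
  have L1': "integrable lborel (\<lambda>y. indicator {0<..<c} y * (y powr (\<alpha> - 1) * (c - y) powr \<alpha>))"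
    using L1[of "\<alpha>-1" "\<alpha>" c] a c by simp
  have L: "integrable lborel w"
  proof (rule Bochner_Integration.integrable_bound[of _ "\<lambda>y. exp (\<bar>\<gamma>\<bar> * c) * (indicator {0<..<c} y * (y powr (\<alpha> - 1) * (c - y) powr \<alpha>))"])
    show "integrable lborel (\<lambda>y. exp (\<bar>\<gamma>\<bar> * c) * (indicator {0<..<c} y * (y powr (\<alpha> - 1) * (c - y) powr \<alpha>)))"
      using L1' by simp
    show "w \<in> borel_measurable lborel" unfolding w_def by measurable
    show "AE x in lborel. norm (w x) \<le> norm (exp (\<bar>\<gamma>\<bar> * c) * (indicator {0<..<c} x * (x powr (\<alpha> - 1) * (c - x) powr \<alpha>)))"
    proof (rule AE_I2)
      fix y
      show "norm (w y) \<le> norm (exp (\<bar>\<gamma>\<bar> * c) * (indicator {0<..<c} y * (y powr (\<alpha> - 1) * (c - y) powr \<alpha>)))"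
      proof (cases "y \<in> {0<..<c}")
        case True
        have "\<gamma> * y \<le> \<bar>\<gamma>\<bar> * c"
        proof -
          have "\<gamma> * y \<le> \<bar>\<gamma> * y\<bar>" by simp
          also have "\<dots> = \<bar>\<gamma>\<bar> * y" using True by (simp add: abs_mult)
          also have "\<dots> \<le> \<bar>\<gamma>\<bar> * c" using True by (intro mult_left_mono) auto
          finally show ?thesis .
        qed
        then have "exp (\<gamma> * y) \<le> exp (\<bar>\<gamma>\<bar> * c)" by simp
        then have "y powr (\<alpha> - 1) * (c - y) powr \<alpha> * exp (\<gamma> * y) \<le> y powr (\<alpha> - 1) * (c - y) powr \<alpha> * exp (\<bar>\<gamma>\<bar> * c)"
          by (intro mult_left_mono) auto
        then show ?thesis using True by (simp add: w_def abs_mult mult_ac)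
      qed (simp add: w_def)
    qed
  qed
  have G: "integrable lborel (\<lambda>y. w y * g y) \<and>
    (\<lambda>n. \<gamma>^n / (fact n * (\<alpha> + n)) * (\<integral>y. w y * (c - y) ^ n \<partial>lborel)) sums (\<integral>y. w y * g y \<partial>lborel)"
  proof (rule GEN[OF L, where R=c and \<phi>="\<lambda>y. c - y" and a="\<lambda>n. \<gamma>^n / (fact n * (\<alpha> + n))" and g=g])
    show "\<And>x. 0 \<le> w x" by (simp add: w_def)
    show "\<And>x. w x \<noteq> 0 \<Longrightarrow> \<bar>c - x\<bar> \<le> c" by (auto simp: w_def indicator_def)
    show "(\<lambda>y. c - y) \<in> borel_measurable borel" by measurable
    show "0 \<le> c" using c by simp
    show "summable (\<lambda>n. \<bar>\<gamma> ^ n / (fact n * (\<alpha> + real n))\<bar> * c ^ n)"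
    proof (rule summable_comparison_test[OF _ summable_divide[OF summable_exp_abs[of \<gamma> c], of \<alpha>]])
      show "\<exists>N. \<forall>n\<ge>N. norm (\<bar>\<gamma> ^ n / (fact n * (\<alpha> + real n))\<bar> * c ^ n) \<le> \<bar>\<gamma> ^ n / fact n\<bar> * c ^ n / \<alpha>"
      proof (intro exI allI impI)
        fix n :: nat
        have "\<bar>\<gamma> ^ n / (fact n * (\<alpha> + real n))\<bar> = \<bar>\<gamma> ^ n / fact n\<bar> / (\<alpha> + n)"
          using a by (simp add: abs_mult)
        also have "\<dots> \<le> \<bar>\<gamma> ^ n / fact n\<bar> / \<alpha>"
          using a by (intro divide_left_mono) auto
        finally have "\<bar>\<gamma> ^ n / (fact n * (\<alpha> + real n))\<bar> * c ^ n \<le> \<bar>\<gamma> ^ n / fact n\<bar> / \<alpha> * c ^ n"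
          using c by (intro mult_right_mono) auto
        then show "norm (\<bar>\<gamma> ^ n / (fact n * (\<alpha> + real n))\<bar> * c ^ n) \<le> \<bar>\<gamma> ^ n / fact n\<bar> * c ^ n / \<alpha>"
          using c by simp
      qed
    qed
    show "(\<lambda>n. \<gamma> ^ n / (fact n * (\<alpha> + real n)) * (c - x) ^ n) sums g x" if "w x \<noteq> 0" for x
    proof -
      have x: "0 < x" "x < c" using that by (auto simp: w_def indicator_def split: if_splits)
      define d where "d = c - x"
      have d: "d > 0" using x by (simp add: d_def)
      have "(\<lambda>n. \<gamma>^n / fact n * (d powr (\<alpha> + n) / (\<alpha> + n)) / d powr \<alpha>) sums (Ainn \<alpha> \<gamma> d / d powr \<alpha>)"
        using Claim1[of \<alpha> d \<gamma>] a d by (intro sums_divide) auto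
      moreover have "\<gamma>^n / fact n * (d powr (\<alpha> + n) / (\<alpha> + n)) / d powr \<alpha> = \<gamma> ^ n / (fact n * (\<alpha> + real n)) * d ^ n" for n :: nat
      proof -
        have e: "d powr (\<alpha> + n) = d powr \<alpha> * d ^ n" using d by (simp add: powr_add powr_realpow)
        have "d powr \<alpha> > 0" using d by simp
        moreover have "\<alpha> + n > 0" using a by simp
        moreover have "(fact n :: real) > 0" by simp
        have gen: "\<And>A F P B E :: real. P \<noteq> 0 \<Longrightarrow> A / F * (P * B / E) / P = A / (F * E) * B"
          by (simp add: field_simps)
        show ?thesis unfolding e using gen[of "d powr \<alpha>"] \<open>d powr \<alpha> > 0\<close> by simp
      qed
      ultimately show ?thesis by (simp add: g_def d_def)
    qed
  qed
  have wn: "(\<integral>y. w y * (c - y) ^ n \<partial>lborel) = Bn \<alpha> \<gamma> c n" for n :: nat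
  proof -
    have "(\<lambda>y. w y * (c - y) ^ n) = (\<lambda>y. indicator {0<..<c} y * y powr (\<alpha> - 1) * (c - y) powr (\<alpha> + n) * exp (\<gamma> * y))"
      by (auto simp: w_def fun_eq_iff indicator_def powr_add powr_realpow)
    then show ?thesis by (simp add: Bn_def)
  qed
  have wg: "(\<lambda>y. w y * g y) = (\<lambda>y. indicator {0<..<c} y * y powr (\<alpha> - 1) * exp (\<gamma> * y) * Ainn \<alpha> \<gamma> (c - y))"
    by (auto simp: w_def g_def fun_eq_iff indicator_def)
  show ?thesis using G unfolding wn wg by (simp add: Jf_def)
qed


definition tt :: "real \<Rightarrow> real \<Rightarrow> real \<Rightarrow> nat \<Rightarrow> nat \<Rightarrow> real" where
  "tt \<alpha> \<gamma> c n m = c powr (2 * \<alpha> + real n + real m) / (fact n * fact m * (\<alpha> + real n))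
             * Beta (\<alpha> + real n + 1) (\<alpha> + real m) * \<gamma> ^ (n + m)"

lemma Series:
  fixes \<alpha> \<gamma> c :: real
  assumes a: "\<alpha> > 0" and c: "c > 0"
  shows "(\<lambda>m. tt \<alpha> \<gamma> c n m) sums (\<gamma>^n / (fact n * (\<alpha> + n)) * Bn \<alpha> \<gamma> c n)"
    and "(\<lambda>n. \<gamma>^n / (fact n * (\<alpha> + n)) * Bn \<alpha> \<gamma> c n) sums Jf \<alpha> \<gamma> c"
proof -
  have gen: "\<And>A F E G H P Bt :: real. F \<noteq> 0 \<Longrightarrow> E \<noteq> 0 \<Longrightarrow> H \<noteq> 0 \<Longrightarrow>
     A / (F * E) * (G / H * (P * Bt)) = P / (F * H * E) * Bt * (A * G)"
    by (simp add: field_simps)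
  have ne: "\<alpha> + real n \<noteq> 0" using a by simp
  have "(\<lambda>m. \<gamma>^n / (fact n * (\<alpha> + n)) * (\<gamma>^m / fact m * (c powr (2*\<alpha> + n + m) * Beta (\<alpha> + n + 1) (\<alpha> + m))))
     sums (\<gamma>^n / (fact n * (\<alpha> + n)) * Bn \<alpha> \<gamma> c n)"
    by (rule sums_mult[OF Claim3[OF a c]])
  moreover have "\<gamma>^n / (fact n * (\<alpha> + n)) * (\<gamma>^m / fact m * (c powr (2*\<alpha> + n + m) * Beta (\<alpha> + n + 1) (\<alpha> + m)))
      = tt \<alpha> \<gamma> c n m" for m
    unfolding tt_def power_add using gen[of "fact n" "\<alpha> + n" "fact m"] ne by simp
  ultimately show "(\<lambda>m. tt \<alpha> \<gamma> c n m) sums (\<gamma>^n / (fact n * (\<alpha> + n)) * Bn \<alpha> \<gamma> c n)" by simp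
  show "(\<lambda>n. \<gamma>^n / (fact n * (\<alpha> + n)) * Bn \<alpha> \<gamma> c n) sums Jf \<alpha> \<gamma> c"
    using Claim2[OF a c] by simp
qed


lemma exp_nn_lt:
  assumes "\<rho> > 0"
  shows "(\<integral>\<^sup>+t. ennreal (exponential_density \<rho> t) * indicator {..<a} t \<partial>lborel)
     = ennreal (if 0 \<le> a then 1 - exp (- \<rho> * a) else 0)"
proof -
  have "(\<integral>\<^sup>+t. ennreal (exponential_density \<rho> t) * indicator {..<a} t \<partial>lborel)
     = (\<integral>\<^sup>+t. ennreal (exponential_density \<rho> t) * indicator {..a} t \<partial>lborel)"
    by (intro nn_integral_cong_AE eventually_mono[OF AE_lborel_singleton[of a]])
       (auto simp: indicator_def)
  also have "\<dots> = ennreal (erlang_CDF 0 \<rho> a)" using nn_integral_erlang_density[OF assms] by simp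
  also have "\<dots> = ennreal (if 0 \<le> a then 1 - exp (- \<rho> * a) else 0)" by (simp add: erlang_CDF_0)
  finally show ?thesis .
qed

lemma prob_part:
  fixes X1 X2 T :: "'s \<Rightarrow> real" and c :: real
  assumes P: "prob_space M" and r: "\<rho> > 0"
   and D1: "distributed M lborel X1 (\<lambda>x. ennreal (gamma_density \<alpha> \<beta> x))"
   and D2: "distributed M lborel X2 (\<lambda>x. ennreal (gamma_density \<alpha> \<beta> x))"
   and DT: "distributed M lborel T (\<lambda>x. ennreal (exponential_density \<rho> x))"
   and I12: "prob_space.indep_var M lborel X1 lborel X2"
   and I3: "prob_space.indep_var M lborel (\<lambda>\<omega>. X1 \<omega> + X2 \<omega>) lborel T"
  shows "emeasure M {\<omega>\<in>space M. X1 \<omega> + X2 \<omega> + T \<omega> < c} =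
    (\<integral>\<^sup>+x. \<integral>\<^sup>+y. ennreal (gamma_density \<alpha> \<beta> x) * ennreal (gamma_density \<alpha> \<beta> y) *
        ennreal (if 0 \<le> c - x - y then 1 - exp (- \<rho> * (c - x - y)) else 0) \<partial>lborel \<partial>lborel)"
proof -
  interpret prob_space M by (rule P)
  define Q where "Q = (\<lambda>a::real. ennreal (if 0 \<le> a then 1 - exp (- \<rho> * a) else 0))"
  have Qm[measurable]: "Q \<in> borel_measurable borel" unfolding Q_def by measurable
  have [measurable]: "X1 \<in> borel_measurable M" "X2 \<in> borel_measurable M" "T \<in> borel_measurable M"
    using distributed_measurable[OF D1] distributed_measurable[OF D2] distributed_measurable[OF DT] by auto
  have J12: "distributed M (lborel \<Otimes>\<^sub>M lborel) (\<lambda>\<omega>. (X1 \<omega>, X2 \<omega>))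
      (\<lambda>(x,y). ennreal (gamma_density \<alpha> \<beta> x) * ennreal (gamma_density \<alpha> \<beta> y))"
    by (rule distributed_joint_indep[OF lborel.sigma_finite_measure_axioms lborel.sigma_finite_measure_axioms D1 D2 I12])
  have eq: "distr M lborel (\<lambda>\<omega>. X1 \<omega> + X2 \<omega>) \<Otimes>\<^sub>M distr M lborel T = distr M (lborel \<Otimes>\<^sub>M lborel) (\<lambda>\<omega>. (X1 \<omega> + X2 \<omega>, T \<omega>))"
    using I3 indep_var_distribution_eq by blast
  define B where "B = {p \<in> space (lborel \<Otimes>\<^sub>M lborel). fst p + snd p < (c::real)}"
  have Bm: "B \<in> sets (lborel \<Otimes>\<^sub>M lborel)" unfolding B_def by measurable
  interpret T: prob_space "distr M lborel T" by (rule prob_space_distr) (use distributed_measurable[OF DT] in simp)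
  have "emeasure M {\<omega>\<in>space M. X1 \<omega> + X2 \<omega> + T \<omega> < c} = emeasure (distr M (lborel \<Otimes>\<^sub>M lborel) (\<lambda>\<omega>. (X1 \<omega> + X2 \<omega>, T \<omega>))) B"
    using Bm by (subst emeasure_distr) (auto simp: B_def space_pair_measure intro!: arg_cong[where f="emeasure M"])
  also have "\<dots> = emeasure (distr M lborel (\<lambda>\<omega>. X1 \<omega> + X2 \<omega>) \<Otimes>\<^sub>M distr M lborel T) B"
    unfolding eq ..
  also have "\<dots> = (\<integral>\<^sup>+s. emeasure (distr M lborel T) (Pair s -` B) \<partial>distr M lborel (\<lambda>\<omega>. X1 \<omega> + X2 \<omega>))"
  proof (rule T.emeasure_pair_measure_alt)
    have "sets (distr M lborel (\<lambda>\<omega>. X1 \<omega> + X2 \<omega>) \<Otimes>\<^sub>M distr M lborel T) = sets (lborel \<Otimes>\<^sub>M lborel)"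
      by (rule sets_pair_measure_cong) simp_all
    then show "B \<in> sets (distr M lborel (\<lambda>\<omega>. X1 \<omega> + X2 \<omega>) \<Otimes>\<^sub>M distr M lborel T)" using Bm by simp
  qed
  also have "\<dots> = (\<integral>\<^sup>+s. Q (c - s) \<partial>distr M lborel (\<lambda>\<omega>. X1 \<omega> + X2 \<omega>))"
  proof (intro nn_integral_cong)
    fix s :: real
    have "Pair s -` B = {..<c - s}" by (auto simp: B_def space_pair_measure)
    then have "emeasure (distr M lborel T) (Pair s -` B) = emeasure (density lborel (\<lambda>x. ennreal (exponential_density \<rho> x))) {..<c - s}"
      by (simp add: distributed_distr_eq_density[OF DT])
    also have "\<dots> = Q (c - s)"
      using exp_nn_lt[OF r, of "c - s"] by (simp add: emeasure_density Q_def)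
    finally show "emeasure (distr M lborel T) (Pair s -` B) = Q (c - s)" .
  qed
  also have "\<dots> = (\<integral>\<^sup>+\<omega>. Q (c - (X1 \<omega> + X2 \<omega>)) \<partial>M)"
  proof (rule nn_integral_distr)
    show "(\<lambda>\<omega>. X1 \<omega> + X2 \<omega>) \<in> measurable M lborel" by simp
    have "(\<lambda>s. Q (c - s)) \<in> borel_measurable borel" by measurable
    then show "(\<lambda>s. Q (c - s)) \<in> borel_measurable (distr M lborel (\<lambda>\<omega>. X1 \<omega> + X2 \<omega>))"
      by (simp add: measurable_distr_eq1)
  qed
  also have "\<dots> = (\<integral>\<^sup>+p. Q (c - fst p - snd p) \<partial>distr M (lborel \<Otimes>\<^sub>M lborel) (\<lambda>\<omega>. (X1 \<omega>, X2 \<omega>)))"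
  proof -
    have m: "(\<lambda>p. Q (c - fst p - snd p)) \<in> borel_measurable (lborel \<Otimes>\<^sub>M lborel)" by measurable
    have "(\<integral>\<^sup>+p. Q (c - fst p - snd p) \<partial>distr M (lborel \<Otimes>\<^sub>M lborel) (\<lambda>\<omega>. (X1 \<omega>, X2 \<omega>))) = (\<integral>\<^sup>+\<omega>. Q (c - fst (X1 \<omega>, X2 \<omega>) - snd (X1 \<omega>, X2 \<omega>)) \<partial>M)"
      by (rule nn_integral_distr) (use m in \<open>simp_all add: measurable_distr_eq1\<close>)
    then show ?thesis by (simp add: diff_diff_eq)
  qed
  also have "\<dots> = (\<integral>\<^sup>+p. (\<lambda>(x,y). ennreal (gamma_density \<alpha> \<beta> x) * ennreal (gamma_density \<alpha> \<beta> y)) p * Q (c - fst p - snd p) \<partial>(lborel \<Otimes>\<^sub>M lborel))"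
    unfolding distributed_distr_eq_density[OF J12]
  proof (rule nn_integral_density)
    show "(\<lambda>p. Q (c - fst p - snd p)) \<in> borel_measurable (lborel \<Otimes>\<^sub>M lborel)" by measurable
    show "(\<lambda>(x,y). ennreal (gamma_density \<alpha> \<beta> x) * ennreal (gamma_density \<alpha> \<beta> y)) \<in> borel_measurable (lborel \<Otimes>\<^sub>M lborel)"
      by (rule distributed_borel_measurable[OF J12])
  qed
  also have "\<dots> = (\<integral>\<^sup>+x. \<integral>\<^sup>+y. ennreal (gamma_density \<alpha> \<beta> x) * ennreal (gamma_density \<alpha> \<beta> y) * Q (c - x - y) \<partial>lborel \<partial>lborel)"
  proof -
    have m: "(\<lambda>p. ennreal (gamma_density \<alpha> \<beta> (fst p)) * ennreal (gamma_density \<alpha> \<beta> (snd p)) * Q (c - fst p - snd p)) \<in> borel_measurable (lborel \<Otimes>\<^sub>M lborel)"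
      unfolding gamma_density_def by measurable
    show ?thesis using lborel.nn_integral_fst[OF m] by (simp add: split_beta)
  qed
  finally show ?thesis by (simp add: Q_def)
qed


definition uu :: "real \<Rightarrow> real \<Rightarrow> real \<Rightarrow> real \<Rightarrow> real \<Rightarrow> real" where
  "uu \<alpha> c \<gamma> x y = indicator {0<..<c} x * x powr (\<alpha> - 1) * exp (\<gamma> * x) *
      (indicator {0<..<c - x} y * y powr (\<alpha> - 1) * exp (\<gamma> * y))"

lemma pw:
  "gamma_density \<alpha> \<beta> x * gamma_density \<alpha> \<beta> y * (if 0 \<le> c - x - y then 1 - exp (- \<rho> * (c - x - y)) else 0)
   = (\<beta> powr \<alpha> / Gamma \<alpha>)^2 * (uu \<alpha> c (- \<beta>) x y - exp (- \<rho> * c) * uu \<alpha> c (\<rho> - \<beta>) x y)"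
proof (cases "x > 0 \<and> y > 0 \<and> x + y < c")
  case True
  then have i1: "indicator {0<..<c} x = (1::real)" and i2: "indicator {0<..<c - x} y = (1::real)"
    by (auto simp: indicator_def)
  have ex: "exp (- \<rho> * c) * exp ((\<rho> - \<beta>) * x) * exp ((\<rho> - \<beta>) * y) = exp (- \<beta> * x) * exp (- \<beta> * y) * exp (- \<rho> * (c - x - y))"
    unfolding exp_add[symmetric] by (simp add: algebra_simps)
  have gen: "\<And>K a b E1 E2 E3 e F1 F2 :: real. e * F1 * F2 = E1 * E2 * E3 \<Longrightarrow>
     K * a * E1 * (K * b * E2) * (1 - E3) = K^2 * (1 * a * E1 * (1 * b * E2) - e * (1 * a * F1 * (1 * b * F2)))"
  proof -
    fix K a b E1 E2 E3 e F1 F2 :: real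
    assume h: "e * F1 * F2 = E1 * E2 * E3"
    have "e * (1 * a * F1 * (1 * b * F2)) = a * b * (e * F1 * F2)" by (simp add: algebra_simps)
    also have "\<dots> = a * b * (E1 * E2 * E3)" by (simp add: h)
    finally have "e * (1 * a * F1 * (1 * b * F2)) = a * b * (E1 * E2 * E3)" .
    then show "K * a * E1 * (K * b * E2) * (1 - E3) = K^2 * (1 * a * E1 * (1 * b * E2) - e * (1 * a * F1 * (1 * b * F2)))"
      by (simp add: algebra_simps power2_eq_square)
  qed
  have "0 \<le> c - x - y" using True by simp
  then show ?thesis using True unfolding uu_def gamma_density_def i1 i2
    using gen[OF ex, of "\<beta> powr \<alpha> / Gamma \<alpha>" "x powr (\<alpha> - 1)" "y powr (\<alpha> - 1)"]
    by (simp only: if_True if_P)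
next
  case False
  then have "uu \<alpha> c \<gamma> x y = 0" for \<gamma> by (auto simp: uu_def indicator_def)
  moreover have "gamma_density \<alpha> \<beta> x * gamma_density \<alpha> \<beta> y * (if 0 \<le> c - x - y then 1 - exp (- \<rho> * (c - x - y)) else 0) = 0"
  proof (cases "x > 0 \<and> y > 0")
    case True
    then have "c - x - y \<le> 0" using False by auto
    then show ?thesis by (cases "c - x - y = 0") auto
  qed (auto simp: gamma_density_def)
  ultimately show ?thesis by simp
qed


lemma uint:
  assumes a: "\<alpha> > 0" and c: "c > 0"
  shows "integrable lborel (\<lambda>y. uu \<alpha> c \<gamma> x y) \<and>
    (\<integral>y. uu \<alpha> c \<gamma> x y \<partial>lborel) = indicator {0<..<c} x * x powr (\<alpha> - 1) * exp (\<gamma> * x) * Ainn \<alpha> \<gamma> (c - x)"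
proof (cases "x \<in> {0<..<c}")
  case True
  have C: "integrable lborel (\<lambda>y. indicator {0<..<c - x} y * y powr (\<alpha> - 1) * exp (\<gamma> * y))"
    using Claim1[of \<alpha> "c - x" \<gamma>] a True by auto
  then show ?thesis unfolding uu_def Ainn_def by simp
next
  case False
  then show ?thesis by (simp add: uu_def)
qed

lemma gd_nonneg: "\<alpha> > 0 \<Longrightarrow> 0 \<le> gamma_density \<alpha> \<beta> x"
  by (simp add: gamma_density_def Gamma_real_pos less_imp_le)

lemma nn_part:
  assumes a: "\<alpha> > 0" and b: "\<beta> > 0" and r: "\<rho> > 0" and c: "c > 0"
  shows "(\<integral>\<^sup>+x. \<integral>\<^sup>+y. ennreal (gamma_density \<alpha> \<beta> x) * ennreal (gamma_density \<alpha> \<beta> y) *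
        ennreal (if 0 \<le> c - x - y then 1 - exp (- \<rho> * (c - x - y)) else 0) \<partial>lborel \<partial>lborel)
     = ennreal ((\<beta> powr \<alpha> / Gamma \<alpha>)^2 * (Jf \<alpha> (- \<beta>) c - exp (- \<rho> * c) * Jf \<alpha> (\<rho> - \<beta>) c))
     \<and> 0 \<le> (\<beta> powr \<alpha> / Gamma \<alpha>)^2 * (Jf \<alpha> (- \<beta>) c - exp (- \<rho> * c) * Jf \<alpha> (\<rho> - \<beta>) c)"
proof -
  define K where "K = (\<beta> powr \<alpha> / Gamma \<alpha>)^2"
  define e where "e = exp (- \<rho> * c)"
  define W where "W = (\<lambda>x y. K * (uu \<alpha> c (- \<beta>) x y - e * uu \<alpha> c (\<rho> - \<beta>) x y))"
  define V where "V = (\<lambda>\<gamma> x. indicator {0<..<c} x * x powr (\<alpha> - 1) * exp (\<gamma> * x) * Ainn \<alpha> \<gamma> (c - x))"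
  have Qnn: "0 \<le> (if 0 \<le> c - x - y then 1 - exp (- \<rho> * (c - x - y)) else 0)" for x y
    using r by (auto simp: mult_nonneg_nonneg)
  have Weq: "gamma_density \<alpha> \<beta> x * gamma_density \<alpha> \<beta> y * (if 0 \<le> c - x - y then 1 - exp (- \<rho> * (c - x - y)) else 0) = W x y" for x y
    using pw[of \<alpha> \<beta> x y c \<rho>] by (simp add: W_def K_def e_def)
  have Wnn: "0 \<le> W x y" for x y
    unfolding Weq[symmetric] using gd_nonneg[OF a] Qnn by (intro mult_nonneg_nonneg) auto
  have nnAE: "AE x in lborel. 0 \<le> K * (V (- \<beta>) x - e * V (\<rho> - \<beta>) x)"
  proof (rule AE_I2)
    fix x
    have "K * (V (- \<beta>) x - e * V (\<rho> - \<beta>) x) = (\<integral>y. W x y \<partial>lborel)"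
      unfolding W_def using uint[OF a c, of "- \<beta>" x] uint[OF a c, of "\<rho> - \<beta>" x] by (simp add: V_def)
    also have "\<dots> \<ge> 0" by (rule integral_nonneg_AE) (simp add: Wnn)
    finally show "0 \<le> K * (V (- \<beta>) x - e * V (\<rho> - \<beta>) x)" .
  qed
  have "(\<integral>\<^sup>+x. \<integral>\<^sup>+y. ennreal (gamma_density \<alpha> \<beta> x) * ennreal (gamma_density \<alpha> \<beta> y) *
        ennreal (if 0 \<le> c - x - y then 1 - exp (- \<rho> * (c - x - y)) else 0) \<partial>lborel \<partial>lborel)
     = (\<integral>\<^sup>+x. \<integral>\<^sup>+y. ennreal (W x y) \<partial>lborel \<partial>lborel)"
  proof (intro nn_integral_cong)
    fix x y
    have "ennreal (gamma_density \<alpha> \<beta> x) * ennreal (gamma_density \<alpha> \<beta> y) *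
        ennreal (if 0 \<le> c - x - y then 1 - exp (- \<rho> * (c - x - y)) else 0)
       = ennreal (gamma_density \<alpha> \<beta> x * gamma_density \<alpha> \<beta> y *
        (if 0 \<le> c - x - y then 1 - exp (- \<rho> * (c - x - y)) else 0))"
      using gd_nonneg[OF a, of \<beta> x] gd_nonneg[OF a, of \<beta> y] Qnn[of x y]
      by (simp add: ennreal_mult)
    then show "ennreal (gamma_density \<alpha> \<beta> x) * ennreal (gamma_density \<alpha> \<beta> y) *
        ennreal (if 0 \<le> c - x - y then 1 - exp (- \<rho> * (c - x - y)) else 0) = ennreal (W x y)"
      by (simp only: Weq)
  qed
  also have "\<dots> = (\<integral>\<^sup>+x. ennreal (K * (V (- \<beta>) x - e * V (\<rho> - \<beta>) x)) \<partial>lborel)"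
  proof (intro nn_integral_cong)
    fix x
    have i1: "integrable lborel (\<lambda>y. uu \<alpha> c (- \<beta>) x y)" "(\<integral>y. uu \<alpha> c (- \<beta>) x y \<partial>lborel) = V (- \<beta>) x"
      using uint[OF a c, of "- \<beta>" x] by (simp_all add: V_def)
    have i2: "integrable lborel (\<lambda>y. uu \<alpha> c (\<rho> - \<beta>) x y)" "(\<integral>y. uu \<alpha> c (\<rho> - \<beta>) x y \<partial>lborel) = V (\<rho> - \<beta>) x"
      using uint[OF a c, of "\<rho> - \<beta>" x] by (simp_all add: V_def)
    have iW: "integrable lborel (W x)" unfolding W_def using i1 i2 by simp
    have "(\<integral>\<^sup>+y. ennreal (W x y) \<partial>lborel) = ennreal (\<integral>y. W x y \<partial>lborel)"
      by (rule nn_integral_eq_integral[OF iW]) (simp add: Wnn)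
    also have "(\<integral>y. W x y \<partial>lborel) = K * (V (- \<beta>) x - e * V (\<rho> - \<beta>) x)"
      unfolding W_def using i1 i2 by simp
    finally show "(\<integral>\<^sup>+y. ennreal (W x y) \<partial>lborel) = ennreal (K * (V (- \<beta>) x - e * V (\<rho> - \<beta>) x))" .
  qed
  also have "\<dots> = ennreal (\<integral>x. K * (V (- \<beta>) x - e * V (\<rho> - \<beta>) x) \<partial>lborel)"
  proof (rule nn_integral_eq_integral)
    have j1: "integrable lborel (V (- \<beta>))" and j2: "integrable lborel (V (\<rho> - \<beta>))"
      using Claim2[OF a c, of "- \<beta>"] Claim2[OF a c, of "\<rho> - \<beta>"] by (simp_all add: V_def)
    show "integrable lborel (\<lambda>x. K * (V (- \<beta>) x - e * V (\<rho> - \<beta>) x))" using j1 j2 by simp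
    show "AE x in lborel. 0 \<le> K * (V (- \<beta>) x - e * V (\<rho> - \<beta>) x)" by (rule nnAE)
  qed
  also have "(\<integral>x. K * (V (- \<beta>) x - e * V (\<rho> - \<beta>) x) \<partial>lborel) = K * (Jf \<alpha> (- \<beta>) c - e * Jf \<alpha> (\<rho> - \<beta>) c)"
  proof -
    have j1: "integrable lborel (V (- \<beta>))" and j2: "integrable lborel (V (\<rho> - \<beta>))"
      using Claim2[OF a c, of "- \<beta>"] Claim2[OF a c, of "\<rho> - \<beta>"] by (simp_all add: V_def)
    then show ?thesis by (simp add: Jf_def V_def)
  qed
  finally have fin: "(\<integral>\<^sup>+x. \<integral>\<^sup>+y. ennreal (gamma_density \<alpha> \<beta> x) * ennreal (gamma_density \<alpha> \<beta> y) *
        ennreal (if 0 \<le> c - x - y then 1 - exp (- \<rho> * (c - x - y)) else 0) \<partial>lborel \<partial>lborel)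
     = ennreal (K * (Jf \<alpha> (- \<beta>) c - e * Jf \<alpha> (\<rho> - \<beta>) c))" .
  have "0 \<le> (\<integral>x. K * (V (- \<beta>) x - e * V (\<rho> - \<beta>) x) \<partial>lborel)"
    by (rule integral_nonneg_AE[OF nnAE])
  also have "(\<integral>x. K * (V (- \<beta>) x - e * V (\<rho> - \<beta>) x) \<partial>lborel) = K * (Jf \<alpha> (- \<beta>) c - e * Jf \<alpha> (\<rho> - \<beta>) c)"
  proof -
    have j1: "integrable lborel (V (- \<beta>))" and j2: "integrable lborel (V (\<rho> - \<beta>))"
      using Claim2[OF a c, of "- \<beta>"] Claim2[OF a c, of "\<rho> - \<beta>"] by (simp_all add: V_def)
    then show ?thesis by (simp add: Jf_def V_def)
  qed
  finally show ?thesis using fin by (simp add: K_def e_def)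
qed

theorem lemma2:
  fixes M :: "'s measure"
    and X :: "nat \<Rightarrow> 's \<Rightarrow> real"
    and Tint :: "nat \<Rightarrow> 's \<Rightarrow> real"
    and \<alpha> \<beta> \<rho> Ttx v :: real
    and k :: nat
  assumes "prob_space M"
    and "\<alpha> > 0" and "\<beta> > 0" and "\<rho> > 0" and "Ttx \<ge> 0"
    and "\<And>n. distributed M lborel (X n) (\<lambda>x. ennreal (gamma_density \<alpha> \<beta> x))"
    and "\<And>n. n \<ge> 1 \<Longrightarrow> distributed M lborel (Tint n) (\<lambda>x. ennreal (exponential_density \<rho> x))"
    and "prob_space.indep_vars M (\<lambda>_. borel)
           (\<lambda>i. case i of Inl n \<Rightarrow> X n | Inr n \<Rightarrow> Tint n) (range Inl \<union> Inr ` {1..})"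
    and "k \<ge> 1"
    and "v \<ge> 0"
  shows "measure M {\<omega> \<in> space M. X (k - 1) \<omega> + X k \<omega> + Tint k \<omega> + Ttx \<ge> v} =
    (let Tv = max 0 (v - Ttx) in
      1 - \<beta> powr (2 * \<alpha>) / (Gamma \<alpha>)\<^sup>2 *
        (\<Sum>n. \<Sum>m. Tv powr (2 * \<alpha> + real n + real m) / (fact n * fact m * (\<alpha> + real n))
             * Beta (\<alpha> + real n + 1) (\<alpha> + real m)
             * ((- \<beta>) ^ (n + m) - exp (- \<rho> * Tv) * (\<rho> - \<beta>) ^ (n + m))))"
proof -
  interpret prob_space M by (rule assms(1))
  have a: "\<alpha> > 0" and b: "\<beta> > 0" and r: "\<rho> > 0" using assms by auto
  define Y where "Y = (\<lambda>i. case i of Inl n \<Rightarrow> X n | Inr n \<Rightarrow> Tint n)"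
  define I where "I = (range Inl \<union> Inr ` {1..} :: (nat + nat) set)"
  have ind: "indep_vars (\<lambda>_. borel) Y I" using assms(8) by (simp add: Y_def I_def)
  have D1: "distributed M lborel (X (k - 1)) (\<lambda>x. ennreal (gamma_density \<alpha> \<beta> x))" by (rule assms(6))
  have D2: "distributed M lborel (X k) (\<lambda>x. ennreal (gamma_density \<alpha> \<beta> x))" by (rule assms(6))
  have DT: "distributed M lborel (Tint k) (\<lambda>x. ennreal (exponential_density \<rho> x))" using assms(7,9) by simp
  have kne: "k - 1 \<noteq> k" using assms(9) by simp
  have I12: "indep_var lborel (X (k - 1)) lborel (X k)"
  proof -
    have "indep_var lborel ((\<lambda>f. f (Inl (k - 1))) \<circ> (\<lambda>\<omega>. restrict (\<lambda>i. Y i \<omega>) {Inl (k - 1)}))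
        lborel ((\<lambda>f. f (Inl k)) \<circ> (\<lambda>\<omega>. restrict (\<lambda>i. Y i \<omega>) {Inl k}))"
    proof (rule indep_var_compose[OF indep_var_restrict[OF ind]])
      show "{Inl (k - 1)} \<inter> {Inl k} = {}" using kne by simp
      show "{Inl (k - 1)} \<subseteq> I" "{Inl k} \<subseteq> I" by (auto simp: I_def)
      show "(\<lambda>f. f (Inl (k - 1))) \<in> measurable (Pi\<^sub>M {Inl (k - 1)} (\<lambda>_. borel)) lborel" by simp
      show "(\<lambda>f. f (Inl k)) \<in> measurable (Pi\<^sub>M {Inl k} (\<lambda>_. borel)) lborel" by simp
    qed
    also have "((\<lambda>f. f (Inl (k - 1))) \<circ> (\<lambda>\<omega>. restrict (\<lambda>i. Y i \<omega>) {Inl (k - 1)})) = X (k - 1)"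
      by (auto simp: Y_def)
    also have "((\<lambda>f. f (Inl k)) \<circ> (\<lambda>\<omega>. restrict (\<lambda>i. Y i \<omega>) {Inl k})) = X k"
      by (auto simp: Y_def)
    finally show ?thesis .
  qed
  have I3: "indep_var lborel (\<lambda>\<omega>. X (k - 1) \<omega> + X k \<omega>) lborel (Tint k)"
  proof -
    have "indep_var lborel ((\<lambda>f. f (Inl (k - 1)) + f (Inl k)) \<circ> (\<lambda>\<omega>. restrict (\<lambda>i. Y i \<omega>) {Inl (k - 1), Inl k}))
        lborel ((\<lambda>f. f (Inr k)) \<circ> (\<lambda>\<omega>. restrict (\<lambda>i. Y i \<omega>) {Inr k}))"
    proof (rule indep_var_compose[OF indep_var_restrict[OF ind]])
      show "{Inl (k - 1), Inl k} \<inter> {Inr k} = {}" by simp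
      show "{Inl (k - 1), Inl k} \<subseteq> I" "{Inr k} \<subseteq> I" using assms(9) by (auto simp: I_def)
      show "(\<lambda>f. f (Inl (k - 1)) + f (Inl k)) \<in> measurable (Pi\<^sub>M {Inl (k - 1), Inl k} (\<lambda>_. borel)) lborel" by simp
      show "(\<lambda>f. f (Inr k)) \<in> measurable (Pi\<^sub>M {Inr k} (\<lambda>_. borel)) lborel" by simp
    qed
    also have "((\<lambda>f. f (Inl (k - 1)) + f (Inl k)) \<circ> (\<lambda>\<omega>. restrict (\<lambda>i. Y i \<omega>) {Inl (k - 1), Inl k})) = (\<lambda>\<omega>. X (k - 1) \<omega> + X k \<omega>)"
      by (auto simp: Y_def)
    also have "((\<lambda>f. f (Inr k)) \<circ> (\<lambda>\<omega>. restrict (\<lambda>i. Y i \<omega>) {Inr k})) = Tint k"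
      by (auto simp: Y_def)
    finally show ?thesis .
  qed
  define c where "c = v - Ttx"
  define E where "E = {\<omega>\<in>space M. X (k - 1) \<omega> + X k \<omega> + Tint k \<omega> < c}"
  have [measurable]: "X (k - 1) \<in> borel_measurable M" "X k \<in> borel_measurable M" "Tint k \<in> borel_measurable M"
    using distributed_measurable[OF D1] distributed_measurable[OF D2] distributed_measurable[OF DT] by auto
  have Eev: "E \<in> events" unfolding E_def by measurable
  have "{\<omega> \<in> space M. X (k - 1) \<omega> + X k \<omega> + Tint k \<omega> + Ttx \<ge> v} = space M - E"
    by (auto simp: E_def c_def)
  then have m1: "measure M {\<omega> \<in> space M. X (k - 1) \<omega> + X k \<omega> + Tint k \<omega> + Ttx \<ge> v} = 1 - prob E"
    using prob_compl[OF Eev] by simp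
  have emE: "emeasure M E = (\<integral>\<^sup>+x. \<integral>\<^sup>+y. ennreal (gamma_density \<alpha> \<beta> x) * ennreal (gamma_density \<alpha> \<beta> y) *
        ennreal (if 0 \<le> c - x - y then 1 - exp (- \<rho> * (c - x - y)) else 0) \<partial>lborel \<partial>lborel)"
    unfolding E_def by (rule prob_part[OF assms(1) r D1 D2 DT I12 I3])
  show ?thesis
  proof (cases "c > 0")
    case False
    have "emeasure M E = 0"
      unfolding emE
    proof (rule nn_integral_zero')
      show "AE x in lborel. (\<integral>\<^sup>+y. ennreal (gamma_density \<alpha> \<beta> x) * ennreal (gamma_density \<alpha> \<beta> y) *
        ennreal (if 0 \<le> c - x - y then 1 - exp (- \<rho> * (c - x - y)) else 0) \<partial>lborel) = 0"
      proof (rule AE_I2, rule nn_integral_zero', rule AE_I2)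
        fix x y
        show "ennreal (gamma_density \<alpha> \<beta> x) * ennreal (gamma_density \<alpha> \<beta> y) *
          ennreal (if 0 \<le> c - x - y then 1 - exp (- \<rho> * (c - x - y)) else 0) = 0"
        proof (cases "x > 0 \<and> y > 0")
          case True
          then have "c - x - y < 0" using False by simp
          then show ?thesis by simp
        qed (auto simp: gamma_density_def)
      qed
    qed
    then have pE: "prob E = 0" by (simp add: emeasure_eq_measure)
    have Tv: "max 0 (v - Ttx) = 0" using False by (simp add: c_def)
    have "(2 * \<alpha> + real n + real m) \<noteq> 0" for n m using a by simp
    then show ?thesis using m1 pE unfolding Let_def Tv by simp
  next
    case True
    define K where "K = (\<beta> powr \<alpha> / Gamma \<alpha>)^2"
    define e where "e = exp (- \<rho> * c)"
    have NP: "emeasure M E = ennreal (K * (Jf \<alpha> (- \<beta>) c - e * Jf \<alpha> (\<rho> - \<beta>) c))"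
      and NN: "0 \<le> K * (Jf \<alpha> (- \<beta>) c - e * Jf \<alpha> (\<rho> - \<beta>) c)"
      using nn_part[OF a b r True] emE by (simp_all add: K_def e_def)
    have pE: "prob E = K * (Jf \<alpha> (- \<beta>) c - e * Jf \<alpha> (\<rho> - \<beta>) c)"
      using NP NN by (simp add: emeasure_eq_measure)
    have Tv: "max 0 (v - Ttx) = c" using True by (simp add: c_def)
    have Kc: "\<beta> powr (2 * \<alpha>) / (Gamma \<alpha>)\<^sup>2 = K"
    proof -
      have "(\<beta> powr \<alpha>)^2 = \<beta> powr \<alpha> * \<beta> powr \<alpha>" by (rule power2_eq_square)
      also have "\<dots> = \<beta> powr (\<alpha> + \<alpha>)" by (rule powr_add[symmetric])
      also have "\<alpha> + \<alpha> = 2 * \<alpha>" by simp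
      finally have "(\<beta> powr \<alpha>)^2 = \<beta> powr (2*\<alpha>)" .
      then show ?thesis by (simp add: K_def power_divide)
    qed
    define s1 where "s1 n = (-\<beta>)^n / (fact n * (\<alpha> + n)) * Bn \<alpha> (-\<beta>) c n" for n
    define s2 where "s2 n = (\<rho>-\<beta>)^n / (fact n * (\<alpha> + n)) * Bn \<alpha> (\<rho>-\<beta>) c n" for n
    have trm: "c powr (2 * \<alpha> + real n + real m) / (fact n * fact m * (\<alpha> + real n))
             * Beta (\<alpha> + real n + 1) (\<alpha> + real m)
             * ((- \<beta>) ^ (n + m) - exp (- \<rho> * c) * (\<rho> - \<beta>) ^ (n + m))
          = tt \<alpha> (-\<beta>) c n m - e * tt \<alpha> (\<rho> - \<beta>) c n m" for n m
    proof -
      have g: "\<And>P A B e :: real. P * (A - e * B) = P * A - e * (P * B)" by (simp add: algebra_simps)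
      show ?thesis unfolding tt_def e_def by (rule g)
    qed
    have inner: "(\<lambda>m. tt \<alpha> (-\<beta>) c n m - e * tt \<alpha> (\<rho> - \<beta>) c n m) sums (s1 n - e * s2 n)" for n
      unfolding s1_def s2_def
      by (intro sums_diff sums_mult Series(1)[OF a True])
    have outer: "(\<lambda>n. s1 n - e * s2 n) sums (Jf \<alpha> (- \<beta>) c - e * Jf \<alpha> (\<rho> - \<beta>) c)"
      unfolding s1_def s2_def
      by (intro sums_diff sums_mult Series(2)[OF a True])
    have "(\<Sum>n. \<Sum>m. c powr (2 * \<alpha> + real n + real m) / (fact n * fact m * (\<alpha> + real n))
             * Beta (\<alpha> + real n + 1) (\<alpha> + real m)
             * ((- \<beta>) ^ (n + m) - exp (- \<rho> * c) * (\<rho> - \<beta>) ^ (n + m)))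
        = Jf \<alpha> (- \<beta>) c - e * Jf \<alpha> (\<rho> - \<beta>) c"
      unfolding trm using inner outer by (simp add: sums_iff)
    then show ?thesis using m1 pE unfolding Let_def Tv Kc by simp
  qed
qed

end
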